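(* Let $G$ be a graph with $m$ edges whose vertex set is partitioned as $V(G)=A\sqcup C$, where $|A|$ is bounded by a fixed constant, $G[A]\cong M$, $C$ is an independent set, and all but at most one vertex of $C$ are adjacent to every vertex of $A$. Then $$\lambda(G)=\sqrt{m}+\frac{e(M)}{v(M)}+O(m^{-1/2}),$$ where the implied constant depends only on the bound on $|A|$.
   Context: All graphs are finite and simple. $e(M)$ and $v(M)$ denote the numbers of edges and vertices of $M$; $\lambda(G)$ is the spectral radius of the adjacency matrix of $G$. *)

theory Defs
  imports "HOL-Analysis.Analysis" "Jordan_Normal_Form.Spectral_Radius"
begin

definition simple_graph :: "nat \<Rightarrow> (nat \<Rightarrow> nat \<Rightarrow> bool) \<Rightarrow> bool" where
  "simple_graph n E \<longleftrightarrow> (\<forall>i<n. \<not> E i i) \<and> (\<forall>i<n. \<forall>j<n. E i j \<longleftrightarrow> E j i)"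

definition num_edges :: "nat \<Rightarrow> (nat \<Rightarrow> nat \<Rightarrow> bool) \<Rightarrow> nat" where
  "num_edges n E = card {(i, j). i < j \<and> j < n \<and> E i j}"

definition induced_edges :: "nat set \<Rightarrow> (nat \<Rightarrow> nat \<Rightarrow> bool) \<Rightarrow> nat" where
  "induced_edges A E = card {(i, j). i \<in> A \<and> j \<in> A \<and> i < j \<and> E i j}"

text \<open>Adjacency matrix (complex entries, as required by spectral_radius).\<close>
definition adj_mat :: "nat \<Rightarrow> (nat \<Rightarrow> nat \<Rightarrow> bool) \<Rightarrow> complex mat" where
  "adj_mat n E = mat n n (\<lambda>(i, j). if E i j then 1 else 0)"

definition graph_spectral_radius :: "nat \<Rightarrow> (nat \<Rightarrow> nat \<Rightarrow> bool) \<Rightarrow> real" where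
  "graph_spectral_radius n E = spectral_radius (adj_mat n E)"

end

theory Submission
  imports Defs
begin

lemma mat_mult_vec_sum:
  assumes "i < n" "v \<in> carrier_vec n"
  shows "(mat n n f *\<^sub>v v) $ i = (\<Sum>j<n. f (i,j) * v $ j)"
  using assms by (auto simp: scalar_prod_def row_def lessThan_atLeast0 intro!: sum.cong)

definition rmat :: "nat \<Rightarrow> (nat \<Rightarrow> nat \<Rightarrow> real) \<Rightarrow> complex mat" where
  "rmat n R = mat n n (\<lambda>(i,j). complex_of_real (R i j))"

lemma rmat_carrier: "rmat n R \<in> carrier_mat n n" by (simp add: rmat_def)

lemma sr_upper:
  fixes R :: "nat \<Rightarrow> nat \<Rightarrow> real" and x :: "nat \<Rightarrow> real"
  assumes n: "n > 0" and R0: "\<And>i j. i < n \<Longrightarrow> j < n \<Longrightarrow> R i j \<ge> 0"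
    and xpos: "\<And>i. i < n \<Longrightarrow> x i > 0"
    and row: "\<And>i. i < n \<Longrightarrow> (\<Sum>j<n. R i j * x j) \<le> r * x i"
  shows "spectral_radius (rmat n R) \<le> r"
proof -
  obtain mu where mu: "mu \<in> spectrum (rmat n R)" and rho: "spectral_radius (rmat n R) = norm mu"
    using spectral_radius_mem_max(1)[OF rmat_carrier n] by auto
  from mu obtain v where ev: "eigenvector (rmat n R) v mu"
    unfolding spectrum_def eigenvalue_def by auto
  have vc: "v \<in> carrier_vec n" and vnz: "v \<noteq> 0\<^sub>v n" and eq: "rmat n R *\<^sub>v v = mu \<cdot>\<^sub>v v"
    using ev unfolding eigenvector_def by (auto simp: rmat_def)
  define f where "f i = norm (v $ i) / x i" for i
  define Mx where "Mx = Max (f ` {..<n})"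
  have fin: "finite (f ` {..<n})" and ne: "f ` {..<n} \<noteq> {}" using n by auto
  obtain i0 where i0: "i0 < n" "f i0 = Mx" using Max_in[OF fin ne] unfolding Mx_def by auto
  have fle: "f j \<le> Mx" if "j < n" for j unfolding Mx_def using fin that by auto
  have vle: "norm (v $ j) \<le> Mx * x j" if "j < n" for j
    using fle[OF that] xpos[OF that] by (simp add: f_def divide_le_eq)
  obtain j1 where j1: "j1 < n" "v $ j1 \<noteq> 0"
    using vnz vc by (metis eq_vecI carrier_vecD index_zero_vec(1) index_zero_vec(2))
  have "f j1 > 0" using j1 xpos[OF j1(1)] by (simp add: f_def)
  hence Mxpos: "Mx > 0" using fle[OF j1(1)] by linarith
  have vi0: "norm (v $ i0) = Mx * x i0" using i0 xpos[OF i0(1)] by (simp add: f_def divide_eq_eq)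
  have "mu * v $ i0 = (rmat n R *\<^sub>v v) $ i0" using eq i0 vc by simp
  also have "\<dots> = (\<Sum>j<n. complex_of_real (R i0 j) * v $ j)"
    unfolding rmat_def using mat_mult_vec_sum[OF i0(1) vc] by simp
  finally have "norm mu * norm (v $ i0) = norm (\<Sum>j<n. complex_of_real (R i0 j) * v $ j)"
    by (metis norm_mult)
  also have "\<dots> \<le> (\<Sum>j<n. norm (complex_of_real (R i0 j) * v $ j))" by (rule norm_sum)
  also have "\<dots> = (\<Sum>j<n. R i0 j * norm (v $ j))"
    using R0 i0 by (intro sum.cong) (auto simp: norm_mult)
  also have "\<dots> \<le> (\<Sum>j<n. R i0 j * (Mx * x j))"
    using R0 i0 vle by (intro sum_mono mult_left_mono) auto
  also have "\<dots> = Mx * (\<Sum>j<n. R i0 j * x j)" by (simp add: sum_distrib_left algebra_simps)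
  also have "\<dots> \<le> Mx * (r * x i0)" using row[OF i0(1)] Mxpos by simp
  also have "\<dots> = r * norm (v $ i0)" using vi0 by simp
  finally have "norm mu * norm (v $ i0) \<le> r * norm (v $ i0)" .
  moreover have "norm (v $ i0) > 0" using vi0 Mxpos xpos[OF i0(1)] by simp
  ultimately show ?thesis using rho by simp
qed

lemma rmat_vec:
  "rmat n S *\<^sub>v vec n (\<lambda>j. complex_of_real (w j)) = vec n (\<lambda>i. complex_of_real (\<Sum>j<n. S i j * w j))"
  by (rule eq_vecI) (auto simp: rmat_def scalar_prod_def lessThan_atLeast0 intro!: sum.cong)

lemma growth:
  fixes S :: "nat \<Rightarrow> nat \<Rightarrow> real"
  assumes S0: "\<And>i j. i < n \<Longrightarrow> j < n \<Longrightarrow> S i j \<ge> 0" and q: "q \<ge> 0"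
  shows "\<forall>w. (\<forall>i<n. w i \<ge> 0) \<longrightarrow> (\<forall>i<n. (\<Sum>j<n. S i j * w j) \<ge> q * w i) \<longrightarrow>
     (\<forall>i<n. Re ((rmat n S ^\<^sub>m k *\<^sub>v vec n (\<lambda>j. complex_of_real (w j))) $ i) \<ge> q^k * w i)"
proof (induction k)
  case 0
  show ?case by (auto simp: rmat_def)
next
  case (Suc k)
  show ?case
  proof (intro allI impI)
    fix w :: "nat \<Rightarrow> real" and i
    assume w0: "\<forall>i<n. w i \<ge> 0" and wS: "\<forall>i<n. (\<Sum>j<n. S i j * w j) \<ge> q * w i" and i: "i < n"
    define w' where "w' i = (\<Sum>j<n. S i j * w j)" for i
    have w'0: "\<forall>i<n. w' i \<ge> 0" unfolding w'_def using w0 S0 by (auto intro!: sum_nonneg)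
    have w'S: "\<forall>i<n. (\<Sum>j<n. S i j * w' j) \<ge> q * w' i"
    proof (intro allI impI)
      fix i assume i: "i < n"
      have "q * w' i = (\<Sum>j<n. S i j * (q * w j))" unfolding w'_def
        by (simp add: sum_distrib_left algebra_simps)
      also have "\<dots> \<le> (\<Sum>j<n. S i j * w' j)"
        using wS S0 i by (intro sum_mono mult_left_mono) (auto simp: w'_def)
      finally show "(\<Sum>j<n. S i j * w' j) \<ge> q * w' i" .
    qed
    have "rmat n S ^\<^sub>m Suc k *\<^sub>v vec n (\<lambda>j. complex_of_real (w j))
        = rmat n S ^\<^sub>m k *\<^sub>v (rmat n S *\<^sub>v vec n (\<lambda>j. complex_of_real (w j)))"
      by (simp add: rmat_carrier assoc_mult_mat_vec[of _ n n _ n])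
    also have "\<dots> = rmat n S ^\<^sub>m k *\<^sub>v vec n (\<lambda>j. complex_of_real (w' j))"
      by (simp add: rmat_vec w'_def)
    finally have eq: "rmat n S ^\<^sub>m Suc k *\<^sub>v vec n (\<lambda>j. complex_of_real (w j))
        = rmat n S ^\<^sub>m k *\<^sub>v vec n (\<lambda>j. complex_of_real (w' j))" .
    have "q ^ Suc k * w i = q^k * (q * w i)" by simp
    also have "\<dots> \<le> q^k * w' i" using wS i q unfolding w'_def by (intro mult_left_mono) auto
    also have "\<dots> \<le> Re ((rmat n S ^\<^sub>m k *\<^sub>v vec n (\<lambda>j. complex_of_real (w' j))) $ i)"
      using Suc.IH w'0 w'S i by blast
    finally show "Re ((rmat n S ^\<^sub>m Suc k *\<^sub>v vec n (\<lambda>j. complex_of_real (w j))) $ i) \<ge> q ^ Suc k * w i"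
      unfolding eq .
  qed
qed

lemma sr_lower:
  fixes R :: "nat \<Rightarrow> nat \<Rightarrow> real" and x :: "nat \<Rightarrow> real"
  assumes n: "n > 0" and R0: "\<And>i j. i < n \<Longrightarrow> j < n \<Longrightarrow> R i j \<ge> 0"
    and x0: "\<And>i. i < n \<Longrightarrow> x i \<ge> 0" and i1: "i1 < n" "x i1 > 0" and r: "r > 0"
    and row: "\<And>i. i < n \<Longrightarrow> (\<Sum>j<n. R i j * x j) \<ge> r * x i"
  shows "r \<le> spectral_radius (rmat n R)"
proof (rule ccontr)
  assume "\<not> r \<le> spectral_radius (rmat n R)"
  hence lt: "spectral_radius (rmat n R) < r" by simp
  obtain mu where "mu \<in> spectrum (rmat n R)" "spectral_radius (rmat n R) = norm mu"
    using spectral_radius_mem_max(1)[OF rmat_carrier n] by auto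
  hence rho0: "spectral_radius (rmat n R) \<ge> 0" by simp
  define s where "s = (spectral_radius (rmat n R) + r) / 2"
  have s: "s > 0" "spectral_radius (rmat n R) < s" "s < r" using lt rho0 by (auto simp: s_def)
  define S where "S i j = R i j / s" for i j
  define q where "q = r / s"
  have q: "q > 1" using s by (simp add: q_def)
  have S0: "\<And>i j. i < n \<Longrightarrow> j < n \<Longrightarrow> S i j \<ge> 0" using R0 s by (simp add: S_def)
  have RS: "R i j = s * S i j" for i j using s by (simp add: S_def)
  have srS: "spectral_radius (rmat n S) < 1"
  proof -
    obtain mu' where mu': "mu' \<in> spectrum (rmat n S)" and rho: "spectral_radius (rmat n S) = norm mu'"
      using spectral_radius_mem_max(1)[OF rmat_carrier n] by auto
    from mu' obtain v where ev: "eigenvector (rmat n S) v mu'"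
      unfolding spectrum_def eigenvalue_def by auto
    have vc: "v \<in> carrier_vec n" and vnz: "v \<noteq> 0\<^sub>v n" and eq: "rmat n S *\<^sub>v v = mu' \<cdot>\<^sub>v v"
      using ev unfolding eigenvector_def by (auto simp: rmat_def)
    have "rmat n R *\<^sub>v v = (complex_of_real s * mu') \<cdot>\<^sub>v v"
    proof (rule eq_vecI)
      fix i assume "i < dim_vec ((complex_of_real s * mu') \<cdot>\<^sub>v v)"
      hence i: "i < n" using vc by simp
      have "(rmat n R *\<^sub>v v) $ i = (\<Sum>j<n. complex_of_real (R i j) * v $ j)"
        unfolding rmat_def using mat_mult_vec_sum[OF i vc] by simp
      also have "\<dots> = complex_of_real s * (\<Sum>j<n. complex_of_real (S i j) * v $ j)"
        by (simp add: RS sum_distrib_left algebra_simps)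
      also have "(\<Sum>j<n. complex_of_real (S i j) * v $ j) = (rmat n S *\<^sub>v v) $ i"
        unfolding rmat_def using mat_mult_vec_sum[OF i vc] by simp
      also have "\<dots> = mu' * v $ i" using eq i vc by simp
      finally show "(rmat n R *\<^sub>v v) $ i = ((complex_of_real s * mu') \<cdot>\<^sub>v v) $ i"
        using i vc by simp
    qed (use vc in \<open>simp add: rmat_def\<close>)
    hence "eigenvector (rmat n R) v (complex_of_real s * mu')"
      using vc vnz unfolding eigenvector_def by (simp add: rmat_def)
    hence "complex_of_real s * mu' \<in> spectrum (rmat n R)"
      unfolding spectrum_def eigenvalue_def by auto
    hence "norm (complex_of_real s * mu') \<le> spectral_radius (rmat n R)"
      using spectral_radius_mem_max(2)[OF rmat_carrier n] by auto
    hence h: "s * norm mu' \<le> spectral_radius (rmat n R)" using s by (simp add: norm_mult)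
    have "s * norm mu' < s * 1" using h s(2) by linarith
    hence "norm mu' < 1" using s(1) mult_less_cancel_left_pos by blast
    thus ?thesis using rho s by simp
  qed
  obtain c where c: "\<And>k. norm_bound (rmat n S ^\<^sub>m k) c"
    using spectral_radius_jnf_norm_bound_less_1_upper_triangular[OF rmat_carrier srS] by auto
  define X where "X = (\<Sum>j<n. x j)"
  have xS: "\<forall>i<n. (\<Sum>j<n. S i j * x j) \<ge> q * x i"
  proof (intro allI impI)
    fix i assume i: "i < n"
    have "(\<Sum>j<n. S i j * x j) = (\<Sum>j<n. R i j * x j) / s"
      by (simp add: S_def sum_divide_distrib)
    moreover have "q * x i = r * x i / s" by (simp add: q_def)
    ultimately show "(\<Sum>j<n. S i j * x j) \<ge> q * x i" using row[OF i] s
      by (simp add: divide_right_mono)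
  qed
  have bound: "q ^ k * x i1 \<le> c * X" for k
  proof -
    let ?B = "rmat n S ^\<^sub>m k"
    let ?v = "vec n (\<lambda>j. complex_of_real (x j))"
    have "q ^ k * x i1 \<le> Re ((?B *\<^sub>v ?v) $ i1)"
      using growth[where n=n and S=S and q=q and k=k, OF S0] q x0 xS i1 by auto
    also have "\<dots> \<le> norm ((?B *\<^sub>v ?v) $ i1)" by (rule complex_Re_le_cmod)
    also have "(?B *\<^sub>v ?v) $ i1 = (\<Sum>j<n. ?B $$ (i1, j) * complex_of_real (x j))"
      using i1 rmat_carrier[of n S]
      by (auto simp: scalar_prod_def lessThan_atLeast0 intro!: sum.cong)
    also have "norm \<dots> \<le> (\<Sum>j<n. norm (?B $$ (i1, j) * complex_of_real (x j)))" by (rule norm_sum)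
    also have "\<dots> \<le> (\<Sum>j<n. c * x j)"
    proof (intro sum_mono)
      fix j assume j: "j \<in> {..<n}"
      have "norm (?B $$ (i1, j)) \<le> c" using c[of k] i1 j rmat_carrier[of n S]
        unfolding norm_bound_def by auto
      thus "norm (?B $$ (i1, j) * complex_of_real (x j)) \<le> c * x j"
        using x0[of j] j by (simp add: norm_mult mult_right_mono)
    qed
    also have "\<dots> = c * X" by (simp add: X_def sum_distrib_left)
    finally show ?thesis .
  qed
  obtain k where "c * X / x i1 < q ^ k" using real_arch_pow[OF q] by auto
  hence "c * X < q ^ k * x i1" using i1 by (simp add: divide_less_eq)
  with bound[of k] show False by simp
qed

lemma card_pairs_sym:
  fixes V :: "nat set"
  assumes fin: "finite V" and irr: "\<forall>i\<in>V. \<not> E i i" and sym: "\<forall>i\<in>V. \<forall>j\<in>V. E i j = E j i"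
  shows "card {(i,j). i\<in>V \<and> j\<in>V \<and> E i j} = 2 * card {(i,j). i\<in>V \<and> j\<in>V \<and> i<j \<and> E i j}"
proof -
  let ?L = "{(i,j). i\<in>V \<and> j\<in>V \<and> i<j \<and> E i j}"
  let ?U = "{(i,j). i\<in>V \<and> j\<in>V \<and> j<i \<and> E i j}"
  have un: "{(i,j). i\<in>V \<and> j\<in>V \<and> E i j} = ?L \<union> ?U"
    using irr by auto (metis linorder_neqE_nat)
  have sw: "?U = prod.swap ` ?L"
  proof
    show "?U \<subseteq> prod.swap ` ?L"
    proof
      fix p assume "p \<in> ?U"
      then obtain i j where p: "p = (i,j)" "i\<in>V" "j\<in>V" "j<i" "E i j" by auto
      hence "(j,i) \<in> ?L" using sym by auto
      thus "p \<in> prod.swap ` ?L" using p by force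
    qed
    show "prod.swap ` ?L \<subseteq> ?U" using sym by auto
  qed
  have finL: "finite ?L" by (rule finite_subset[of _ "V \<times> V"]) (use fin in auto)
  have finU: "finite ?U" by (rule finite_subset[of _ "V \<times> V"]) (use fin in auto)
  have "card ?U = card ?L" unfolding sw by (rule card_image) simp
  moreover have "?L \<inter> ?U = {}" by auto
  ultimately show ?thesis unfolding un using card_Un_disjoint[OF finL finU] by simp
qed

lemma card_pairs_sum:
  fixes V W :: "nat set"
  assumes "finite V" "finite W"
  shows "card {(i,j). i\<in>V \<and> j\<in>W \<and> E i j} = (\<Sum>i\<in>V. card {j\<in>W. E i j})"
proof -
  have "{(i,j). i\<in>V \<and> j\<in>W \<and> E i j} = Sigma V (\<lambda>i. {j\<in>W. E i j})" by auto
  thus ?thesis using assms by (simp add: card_SigmaI)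
qed

lemma card_pairs_swap:
  fixes V W :: "nat set"
  assumes sym: "\<forall>i\<in>V. \<forall>j\<in>W. E i j = E j i"
  shows "card {(i,j). i\<in>V \<and> j\<in>W \<and> E i j} = card {(j,i). j\<in>W \<and> i\<in>V \<and> E j i}"
proof -
  have "{(j,i). j\<in>W \<and> i\<in>V \<and> E j i} = prod.swap ` {(i,j). i\<in>V \<and> j\<in>W \<and> E i j}"
  proof
    show "{(j,i). j\<in>W \<and> i\<in>V \<and> E j i} \<subseteq> prod.swap ` {(i,j). i\<in>V \<and> j\<in>W \<and> E i j}"
    proof
      fix p assume "p \<in> {(j,i). j\<in>W \<and> i\<in>V \<and> E j i}"
      then obtain j i where p: "p = (j,i)" "j\<in>W" "i\<in>V" "E j i" by auto
      hence "(i,j) \<in> {(i,j). i\<in>V \<and> j\<in>W \<and> E i j}" using sym by auto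
      thus "p \<in> prod.swap ` {(i,j). i\<in>V \<and> j\<in>W \<and> E i j}" using p by force
    qed
    show "prod.swap ` {(i,j). i\<in>V \<and> j\<in>W \<and> E i j} \<subseteq> {(j,i). j\<in>W \<and> i\<in>V \<and> E j i}"
      using sym by auto
  qed
  thus ?thesis by (simp add: card_image)
qed

lemma sqrt_diff_bound:
  fixes p m :: real
  assumes "p \<ge> 0" "m > 0" "\<bar>p - m\<bar> \<le> B"
  shows "\<bar>sqrt p - sqrt m\<bar> \<le> B / sqrt m"
proof -
  have sm: "sqrt m > 0" using assms by simp
  have e: "(sqrt p - sqrt m) * (sqrt p + sqrt m) = p - m"
    using assms by (simp add: algebra_simps)
  have "\<bar>sqrt p - sqrt m\<bar> * (sqrt p + sqrt m) = \<bar>(sqrt p - sqrt m) * (sqrt p + sqrt m)\<bar>"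
    using assms by (simp add: abs_mult)
  also have "\<dots> = \<bar>p - m\<bar>" using e by simp
  also have "\<dots> \<le> B" by fact
  finally have "\<bar>sqrt p - sqrt m\<bar> * sqrt m \<le> B"
    using assms(1) by (smt (verit) abs_ge_zero mult_left_mono real_sqrt_ge_zero)
  thus ?thesis using sm by (simp add: le_divide_eq)
qed

lemma adj_rmat: "adj_mat n E = rmat n (\<lambda>i j. if E i j then 1 else 0)"
  unfolding adj_mat_def rmat_def by (rule arg_cong[where f="mat n n"]) (auto simp: fun_eq_iff)

lemma main_bound:
  fixes n K :: nat and E :: "nat \<Rightarrow> nat \<Rightarrow> bool" and A :: "nat set"
  assumes sg: "simple_graph n E" and AV: "A \<subseteq> {0..<n}" and Ane: "A \<noteq> {}" and aK: "card A \<le> K"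
    and indep: "\<forall>i\<in>{0..<n} - A. \<forall>j\<in>{0..<n} - A. \<not> E i j"
    and exc: "card {v \<in> {0..<n} - A. \<exists>a\<in>A. \<not> E v a} \<le> 1"
    and mbig: "num_edges n E \<ge> 2*K^2+K+1"
  shows "\<bar>graph_spectral_radius n E - sqrt (real (num_edges n E))
            - real (induced_edges A E) / real (card A)\<bar>
         \<le> 3 * real K^2 / sqrt (real (num_edges n E))"
proof -
  define V where "V = {0..<n}"
  define C where "C = V - A"
  define Xs where "Xs = {v\<in>C. \<exists>a\<in>A. \<not> E v a}"
  define Rg where "Rg = C - Xs"
  define a where "a = card A"
  define e where "e = induced_edges A E"
  define m where "m = num_edges n E"
  define d where "d j = card {c\<in>A. E j c}" for j
  define \<sigma> where "\<sigma> = (\<Sum>c\<in>C. card {b\<in>A. E c b})"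
  have finV: "finite V" by (simp add: V_def)
  have AsV: "A \<subseteq> V" using AV by (simp add: V_def)
  have finA: "finite A" using AsV finV finite_subset by blast
  have finC: "finite C" using finV by (simp add: C_def)
  have finX: "finite Xs" using finC by (simp add: Xs_def)
  have finR: "finite Rg" using finC by (simp add: Rg_def)
  have a1: "a \<ge> 1" using Ane finA by (simp add: a_def Suc_le_eq card_gt_0_iff)
  have irr: "\<forall>i\<in>V. \<not>E i i" and sym: "\<forall>i\<in>V. \<forall>j\<in>V. E i j = E j i"
    using sg by (auto simp: simple_graph_def V_def)
  have VAC: "V = A \<union> C" "A \<inter> C = {}" using AsV by (auto simp: C_def)
  have CRX: "C = Rg \<union> Xs" "Rg \<inter> Xs = {}" by (auto simp: Rg_def Xs_def)
  obtain b0 where b0: "b0 \<in> A" using Ane by auto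
  have n0: "n > 0" using b0 AV by auto
  have indepC: "\<And>i j. i \<in> C \<Longrightarrow> j \<in> C \<Longrightarrow> \<not> E i j" using indep by (auto simp: C_def V_def)
  have Rgadj: "\<And>c b. c \<in> Rg \<Longrightarrow> b \<in> A \<Longrightarrow> E c b \<and> E b c"
    using sym AsV by (auto simp: Rg_def Xs_def C_def)
  have cardX: "card Xs \<le> 1" using exc by (simp add: Xs_def C_def V_def)
  have F1: "(\<Sum>b\<in>A. d b) = 2 * e"
  proof -
    have "card {(i,j). i\<in>A \<and> j\<in>A \<and> E i j} = 2 * e"
      using card_pairs_sym[of A E] finA irr sym AsV unfolding e_def induced_edges_def by blast
    moreover have "card {(i,j). i\<in>A \<and> j\<in>A \<and> E i j} = (\<Sum>b\<in>A. d b)"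
      using card_pairs_sum[OF finA finA, of E] by (simp add: d_def)
    ultimately show ?thesis by simp
  qed
  have dle: "d j \<le> a" for j unfolding d_def a_def by (rule card_mono[OF finA]) auto
  have e2: "2 * e \<le> a * a"
  proof -
    have "(\<Sum>b\<in>A. d b) \<le> (\<Sum>b\<in>A. a)" by (rule sum_mono) (use dle in auto)
    thus ?thesis using F1 by (simp add: a_def)
  qed
  have F2: "m = e + \<sigma>"
  proof -
    have ne: "{(i,j). i<j \<and> j<n \<and> E i j} = {(i,j). i\<in>V \<and> j\<in>V \<and> i<j \<and> E i j}"
      by (auto simp: V_def)
    have "card {(i,j). i\<in>V \<and> j\<in>V \<and> E i j} = 2 * m"
      using card_pairs_sym[OF finV irr sym] unfolding m_def num_edges_def ne by simp
    moreover have "card {(i,j). i\<in>V \<and> j\<in>V \<and> E i j} = (\<Sum>i\<in>V. card {j\<in>V. E i j})"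
      by (rule card_pairs_sum[OF finV finV])
    moreover have split: "card {j\<in>V. E i j} = card {j\<in>A. E i j} + card {j\<in>C. E i j}" for i
    proof -
      have "{j\<in>V. E i j} = {j\<in>A. E i j} \<union> {j\<in>C. E i j}" using VAC by auto
      thus ?thesis using finA finC VAC(2) by (auto intro!: card_Un_disjoint)
    qed
    moreover have "(\<Sum>i\<in>V. card {j\<in>V. E i j}) = (\<Sum>i\<in>A. card {j\<in>V. E i j}) + (\<Sum>i\<in>C. card {j\<in>V. E i j})"
      unfolding VAC(1) using finA finC VAC(2) by (rule sum.union_disjoint)
    moreover have "(\<Sum>i\<in>C. card {j\<in>V. E i j}) = \<sigma>"
    proof -
      have "card {j\<in>C. E i j} = 0" if "i \<in> C" for i
      proof -
        have "{j\<in>C. E i j} = {}" using indepC that by auto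
        thus ?thesis by (metis card.empty)
      qed
      thus ?thesis unfolding \<sigma>_def split by simp
    qed
    moreover have "(\<Sum>i\<in>A. card {j\<in>V. E i j}) = 2 * e + \<sigma>"
    proof -
      have "(\<Sum>i\<in>A. card {j\<in>V. E i j}) = (\<Sum>i\<in>A. d i) + (\<Sum>i\<in>A. card {j\<in>C. E i j})"
        unfolding split d_def by (simp add: sum.distrib)
      moreover have "(\<Sum>i\<in>A. card {j\<in>C. E i j}) = \<sigma>"
      proof -
        have "(\<Sum>i\<in>A. card {j\<in>C. E i j}) = card {(i,j). i\<in>A \<and> j\<in>C \<and> E i j}"
          by (rule card_pairs_sum[OF finA finC, symmetric])
        also have "\<dots> = card {(j,i). j\<in>C \<and> i\<in>A \<and> E j i}"
          by (rule card_pairs_swap) (use sym AsV VAC in blast)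
        also have "\<dots> = (\<Sum>c\<in>C. card {b\<in>A. E c b})"
          by (rule card_pairs_sum[OF finC finA])
        finally show ?thesis unfolding \<sigma>_def .
      qed
      ultimately show ?thesis using F1 by simp
    qed
    ultimately show ?thesis by simp
  qed
  have sig_lo: "card Rg * a \<le> \<sigma>"
  proof -
    have "\<sigma> = (\<Sum>c\<in>Rg. card {b\<in>A. E c b}) + (\<Sum>c\<in>Xs. card {b\<in>A. E c b})"
      unfolding \<sigma>_def CRX(1) using finR finX CRX(2) by (rule sum.union_disjoint)
    moreover have "(\<Sum>c\<in>Rg. card {b\<in>A. E c b}) = (\<Sum>c\<in>Rg. a)"
    proof (rule sum.cong)
      fix c assume "c \<in> Rg"
      hence "{b\<in>A. E c b} = A" using Rgadj by auto
      thus "card {b\<in>A. E c b} = a" by (simp add: a_def)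
    qed simp
    ultimately show ?thesis by simp
  qed
  have sig_hi: "\<sigma> \<le> card C * a"
  proof -
    have "\<sigma> \<le> (\<Sum>c\<in>C. a)" unfolding \<sigma>_def a_def by (rule sum_mono, rule card_mono[OF finA]) auto
    thus ?thesis by simp
  qed
  have cardC: "card C \<le> card Rg + 1"
    using card_Un_disjoint[OF finR finX CRX(2)] CRX(1) cardX by simp
  define ar where "ar = real a"
  define h where "h = real e / ar"
  define t where "t j = real (d j) - 2 * h" for j
  define R where "R i j = (if E i j then 1 else 0 :: real)" for i j
  define kk where "kk = real (card C)"
  define kl where "kl = real (card Rg)"
  have ar1: "ar \<ge> 1" using a1 by (simp add: ar_def)
  have h0: "h \<ge> 0" using ar1 by (simp add: h_def)
  have h2: "2 * h \<le> ar"
  proof -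
    have "2 * real e \<le> ar * ar" using e2 unfolding ar_def by (metis of_nat_le_iff of_nat_mult of_nat_numeral)
    thus ?thesis using ar1 by (simp add: h_def divide_le_eq)
  qed
  have tb: "\<bar>t j\<bar> \<le> ar" for j
    using dle[of j] h0 h2 unfolding t_def ar_def by auto
  have tsum: "(\<Sum>j\<in>A. t j) = 0"
  proof -
    have "(\<Sum>j\<in>A. t j) = (\<Sum>j\<in>A. real (d j)) - ar * (2 * h)"
      by (simp add: t_def sum_subtractf ar_def a_def)
    also have "(\<Sum>j\<in>A. real (d j)) = 2 * real e" using F1 by (metis of_nat_sum of_nat_mult of_nat_numeral)
    finally show ?thesis using ar1 by (simp add: h_def)
  qed
  have R0: "\<And>i j. R i j \<ge> 0" by (simp add: R_def)
  have Rle1: "\<And>i j. R i j \<le> 1" by (simp add: R_def)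
  have rowsplit: "(\<Sum>j<n. R i j * x j) = (\<Sum>j\<in>A. R i j * x j) + (\<Sum>j\<in>C. R i j * x j)" for i x
  proof -
    have "{..<n} = A \<union> C" using VAC by (simp add: V_def atLeast0LessThan)
    thus ?thesis using sum.union_disjoint[OF finA finC VAC(2)] by simp
  qed
  have RC0: "\<And>i j. i \<in> C \<Longrightarrow> j \<in> C \<Longrightarrow> R i j = 0" using indepC by (simp add: R_def)
  have sumRA: "(\<Sum>j\<in>A. R i j) = real (d i)" for i
  proof -
    have "(\<Sum>j\<in>A. R i j) = (\<Sum>j\<in>{j\<in>A. E i j}. 1)"
      unfolding R_def using sum.inter_filter[OF finA, of "\<lambda>_. 1::real" "E i"] by simp
    thus ?thesis by (simp add: d_def)
  qed
  have RA: "(\<Sum>j\<in>A. R i j * (1 + t j / r)) = real (d i) + (\<Sum>j\<in>A. R i j * t j) / r" for i r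
    by (simp add: algebra_simps sum.distrib sum_divide_distrib sumRA)
  have Tb: "\<bar>\<Sum>j\<in>A. R i j * t j\<bar> \<le> ar * ar" for i
  proof -
    have "\<bar>\<Sum>j\<in>A. R i j * t j\<bar> \<le> (\<Sum>j\<in>A. \<bar>R i j * t j\<bar>)" by (rule sum_abs)
    also have "\<dots> \<le> (\<Sum>j\<in>A. ar)"
    proof (rule sum_mono)
      fix j assume "j \<in> A"
      have "\<bar>R i j * t j\<bar> = R i j * \<bar>t j\<bar>" using R0 by (simp add: abs_mult)
      also have "\<dots> \<le> 1 * ar" using tb[of j] R0[of i j] Rle1[of i j] by (intro mult_mono) auto
      finally show "\<bar>R i j * t j\<bar> \<le> ar" by simp
    qed
    also have "\<dots> = ar * ar" by (simp add: ar_def a_def)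
    finally show ?thesis .
  qed
  have sumA: "(\<Sum>j\<in>A. (1 + t j / r)) = ar" for r
    by (simp add: sum.distrib tsum sum_divide_distrib[symmetric] ar_def a_def)
  have sr_eq: "graph_spectral_radius n E = spectral_radius (rmat n R)"
    unfolding graph_spectral_radius_def adj_rmat R_def ..
  have abs_tA: "t j \<ge> - 2 * h" for j by (simp add: t_def)
  define Qu where "Qu = kk * ar + ar * ar"
  define ru where "ru = h + sqrt (h^2 + Qu)"
  have Qu0: "Qu > 0" using ar1 by (simp add: Qu_def kk_def add_nonneg_pos)
  have sq_u: "sqrt (h^2 + Qu) > h"
  proof -
    have "sqrt (h^2) < sqrt (h^2 + Qu)" using Qu0 by (intro real_sqrt_less_mono) simp
    thus ?thesis using h0 by simp
  qed
  have ru_gt: "ru > 2 * h" using sq_u by (simp add: ru_def)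
  have ru_pos: "ru > 0" using ru_gt h0 by simp
  have ru_eq: "ru * ru - 2 * h * ru = Qu"
  proof -
    have "sqrt (h^2 + Qu) ^ 2 = h^2 + Qu" using Qu0 by (intro real_sqrt_pow2) (simp add: add_nonneg_pos)
    thus ?thesis unfolding ru_def by (simp add: algebra_simps power2_eq_square)
  qed
  define xu where "xu j = (if j \<in> A then 1 + t j / ru else ar / ru)" for j
  have upper: "spectral_radius (rmat n R) \<le> ru"
  proof (rule sr_upper[OF n0])
    show "\<And>i j. i < n \<Longrightarrow> j < n \<Longrightarrow> 0 \<le> R i j" using R0 by simp
    show "0 < xu i" if "i < n" for i
    proof (cases "i \<in> A")
      case True
      have "ru + t i > 0" using ru_gt abs_tA[of i] by linarith
      hence "(ru + t i) / ru > 0" using ru_pos by simp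
      thus ?thesis using True ru_pos by (simp add: xu_def add_divide_distrib)
    next
      case False thus ?thesis using ru_pos ar1 by (simp add: xu_def)
    qed
    show "(\<Sum>j<n. R i j * xu j) \<le> ru * xu i" if "i < n" for i
    proof (cases "i \<in> A")
      case True
      have sA: "(\<Sum>j\<in>A. R i j * xu j) = real (d i) + (\<Sum>j\<in>A. R i j * t j) / ru"
        using RA[of i ru] by (simp add: xu_def)
      have sC: "(\<Sum>j\<in>C. R i j * xu j) \<le> kk * ar / ru"
      proof -
        have "(\<Sum>j\<in>C. R i j * xu j) \<le> (\<Sum>j\<in>C. ar / ru)"
        proof (rule sum_mono)
          fix j assume "j \<in> C"
          hence xj: "xu j = ar / ru" using VAC by (auto simp: xu_def)
          have "R i j * (ar / ru) \<le> 1 * (ar / ru)" using Rle1[of i j] ar1 ru_pos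
            by (intro mult_right_mono) auto
          thus "R i j * xu j \<le> ar / ru" unfolding xj by simp
        qed
        thus ?thesis by (simp add: kk_def)
      qed
      have key: "(\<Sum>j\<in>A. R i j * t j) + kk * ar \<le> ru * ru - 2 * h * ru"
        using Tb[of i] unfolding ru_eq Qu_def by linarith
      have "(\<Sum>j\<in>A. R i j * t j) / ru + kk * ar / ru \<le> ru - 2 * h"
      proof -
        have "((\<Sum>j\<in>A. R i j * t j) + kk * ar) / ru \<le> (ru * ru - 2 * h * ru) / ru"
          using key ru_pos by (simp add: divide_right_mono)
        also have "\<dots> = ru - 2 * h" using ru_pos by (simp add: field_simps)
        finally show ?thesis by (simp add: add_divide_distrib)
      qed
      moreover have "ru * xu i = ru + t i" using True ru_pos by (simp add: xu_def algebra_simps)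
      ultimately show ?thesis using sA sC rowsplit[of i xu] by (simp add: t_def)
    next
      case False
      hence iC: "i \<in> C" using that by (simp add: C_def V_def)
      have sC: "(\<Sum>j\<in>C. R i j * xu j) = 0" using RC0[OF iC] by simp
      have "(\<Sum>j\<in>A. R i j * xu j) \<le> (\<Sum>j\<in>A. xu j)"
      proof (rule sum_mono)
        fix j assume jA: "j \<in> A"
        have "xu j > 0"
        proof -
          have "ru + t j > 0" using ru_gt abs_tA[of j] by linarith
          hence "(ru + t j) / ru > 0" using ru_pos by simp
          thus ?thesis using jA ru_pos by (simp add: xu_def add_divide_distrib)
        qed
        thus "R i j * xu j \<le> xu j" using Rle1[of i j] by (simp add: mult_left_le_one_le)
      qed
      also have "(\<Sum>j\<in>A. xu j) = ar" using sumA[of ru] by (simp add: xu_def)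
      finally show ?thesis using sC rowsplit[of i xu] False ru_pos by (simp add: xu_def)
    qed
  qed
  have big: "card Rg * a > a * a"
  proof -
    have "a * a \<le> K * K" using aK by (simp add: a_def mult_le_mono)
    moreover have "\<sigma> \<le> card Rg * a + a"
      using sig_hi mult_le_mono1[OF cardC, of a] by simp
    moreover have "m \<ge> 2 * (K * K) + K + 1" using mbig by (simp add: m_def power2_eq_square)
    moreover have "a \<le> K" using aK by (simp add: a_def)
    ultimately show ?thesis using F2 e2 by linarith
  qed
  define Ql where "Ql = kl * ar - ar * ar"
  define rl where "rl = h + sqrt (h^2 + Ql)"
  have Ql0: "Ql > 0"
  proof -
    have "real (card Rg * a) > real (a * a)" using big by (simp only: of_nat_less_iff)
    thus ?thesis by (simp add: Ql_def kl_def ar_def)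
  qed
  have sq_l: "sqrt (h^2 + Ql) > h"
  proof -
    have "sqrt (h^2) < sqrt (h^2 + Ql)" using Ql0 by (intro real_sqrt_less_mono) simp
    thus ?thesis using h0 by simp
  qed
  have rl_gt: "rl > 2 * h" using sq_l by (simp add: rl_def)
  have rl_pos: "rl > 0" using rl_gt h0 by simp
  have rl_eq: "rl * rl - 2 * h * rl = Ql"
  proof -
    have "sqrt (h^2 + Ql) ^ 2 = h^2 + Ql" using Ql0 by (intro real_sqrt_pow2) (simp add: add_nonneg_pos)
    thus ?thesis unfolding rl_def by (simp add: algebra_simps power2_eq_square)
  qed
  define xl where "xl j = (if j \<in> A then 1 + t j / rl else if j \<in> Xs then 0 else ar / rl)" for j
  have xlA: "xl j > 0" if "j \<in> A" for j
  proof -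
    have "rl + t j > 0" using rl_gt abs_tA[of j] by linarith
    hence "(rl + t j) / rl > 0" using rl_pos by simp
    thus ?thesis using that rl_pos by (simp add: xl_def add_divide_distrib)
  qed
  have xl0: "xl j \<ge> 0" for j
    using xlA[of j] rl_pos ar1 by (cases "j \<in> A") (auto simp: xl_def)
  have lower: "rl \<le> spectral_radius (rmat n R)"
  proof (rule sr_lower[OF n0 _ _ _ _ rl_pos])
    show "\<And>i j. i < n \<Longrightarrow> j < n \<Longrightarrow> 0 \<le> R i j" using R0 by simp
    show "\<And>i. i < n \<Longrightarrow> 0 \<le> xl i" using xl0 by simp
    show "b0 < n" using b0 AV by auto
    show "0 < xl b0" using xlA[OF b0] .
    show "rl * xl i \<le> (\<Sum>j<n. R i j * xl j)" if "i < n" for i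
    proof (cases "i \<in> A")
      case True
      have sA: "(\<Sum>j\<in>A. R i j * xl j) = real (d i) + (\<Sum>j\<in>A. R i j * t j) / rl"
        using RA[of i rl] by (simp add: xl_def)
      have sC: "(\<Sum>j\<in>C. R i j * xl j) = kl * ar / rl"
      proof -
        have "(\<Sum>j\<in>C. R i j * xl j) = (\<Sum>j\<in>Rg. R i j * xl j) + (\<Sum>j\<in>Xs. R i j * xl j)"
          unfolding CRX(1) using finR finX CRX(2) by (rule sum.union_disjoint)
        moreover have "(\<Sum>j\<in>Xs. R i j * xl j) = 0"
          using VAC by (intro sum.neutral) (auto simp: xl_def Xs_def)
        moreover have "(\<Sum>j\<in>Rg. R i j * xl j) = (\<Sum>j\<in>Rg. ar / rl)"
        proof (rule sum.cong)
          fix j assume jR: "j \<in> Rg"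
          hence "E i j" using Rgadj True by blast
          moreover have "xl j = ar / rl" using jR VAC by (auto simp: xl_def Rg_def)
          ultimately show "R i j * xl j = ar / rl" by (simp add: R_def)
        qed simp
        ultimately show ?thesis by (simp add: kl_def)
      qed
      have key: "(\<Sum>j\<in>A. R i j * t j) + kl * ar \<ge> rl * rl - 2 * h * rl"
        using Tb[of i] unfolding rl_eq Ql_def by linarith
      have "(\<Sum>j\<in>A. R i j * t j) / rl + kl * ar / rl \<ge> rl - 2 * h"
      proof -
        have "((\<Sum>j\<in>A. R i j * t j) + kl * ar) / rl \<ge> (rl * rl - 2 * h * rl) / rl"
          using key rl_pos by (simp add: divide_right_mono)
        moreover have "(rl * rl - 2 * h * rl) / rl = rl - 2 * h" using rl_pos by (simp add: field_simps)
        ultimately show ?thesis by (simp add: add_divide_distrib)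
      qed
      moreover have "rl * xl i = rl + t i" using True rl_pos by (simp add: xl_def algebra_simps)
      ultimately show ?thesis using sA sC rowsplit[of i xl] by (simp add: t_def)
    next
      case False
      hence iC: "i \<in> C" using that by (simp add: C_def V_def)
      have sC: "(\<Sum>j\<in>C. R i j * xl j) = 0" using RC0[OF iC] by simp
      show ?thesis
      proof (cases "i \<in> Xs")
        case True
        have "(\<Sum>j\<in>A. R i j * xl j) \<ge> 0" using R0 xl0 by (intro sum_nonneg) simp
        thus ?thesis using True False sC rowsplit[of i xl] by (simp add: xl_def)
      next
        case nX: False
        hence iR: "i \<in> Rg" using iC by (simp add: Rg_def)
        have "(\<Sum>j\<in>A. R i j * xl j) = (\<Sum>j\<in>A. 1 + t j / rl)"
          using Rgadj[OF iR] by (intro sum.cong) (auto simp: R_def xl_def)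
        also have "\<dots> = ar" by (rule sumA)
        finally show ?thesis using sC rowsplit[of i xl] False nX rl_pos by (simp add: xl_def)
      qed
    qed
  qed
  define B where "B = 3 * real K ^ 2"
  have mr: "real m = real e + real \<sigma>" using F2 by simp
  have s1: "kl * ar \<le> real \<sigma>" using sig_lo unfolding kl_def ar_def by (metis of_nat_le_iff of_nat_mult)
  have s2: "real \<sigma> \<le> kk * ar" using sig_hi unfolding kk_def ar_def by (metis of_nat_le_iff of_nat_mult)
  have s3: "kk * ar \<le> kl * ar + ar"
  proof -
    have "kk \<le> kl + 1" using cardC unfolding kk_def kl_def by simp
    hence "kk * ar \<le> (kl + 1) * ar" using ar1 by (intro mult_right_mono) auto
    thus ?thesis by (simp add: algebra_simps)
  qed
  have s4: "2 * real e \<le> ar * ar" using e2 unfolding ar_def by (metis of_nat_le_iff of_nat_mult of_nat_numeral)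
  have s5: "h * h \<le> ar * ar" using h0 h2 by (intro mult_mono) auto
  have s6: "ar * ar \<le> real K * real K" using aK ar1 unfolding ar_def a_def by (intro mult_mono) auto
  have s7: "ar \<le> ar * ar" using mult_left_mono[of 1 ar ar] ar1 by simp
  have h00: "0 \<le> h * h" using h0 by simp
  have m_pos: "real m > 0" using mbig by (simp add: m_def)
  have Pu_b: "\<bar>(h^2 + Qu) - real m\<bar> \<le> B"
    unfolding abs_le_iff B_def Qu_def mr power2_eq_square using s1 s2 s3 s4 s5 s6 s7 h00 by (intro conjI) linarith+
  have Pl_b: "\<bar>(h^2 + Ql) - real m\<bar> \<le> B"
    unfolding abs_le_iff B_def Ql_def mr power2_eq_square using s1 s2 s3 s4 s5 s6 s7 h00 by (intro conjI) linarith+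
  have u: "\<bar>sqrt (h^2 + Qu) - sqrt (real m)\<bar> \<le> B / sqrt (real m)"
    using Qu0 m_pos Pu_b by (intro sqrt_diff_bound) (auto intro: add_nonneg_pos)
  have l: "\<bar>sqrt (h^2 + Ql) - sqrt (real m)\<bar> \<le> B / sqrt (real m)"
    using Ql0 m_pos Pl_b by (intro sqrt_diff_bound) (auto intro: add_nonneg_pos)
  have hh: "real (induced_edges A E) / real (card A) = h" by (simp add: h_def e_def ar_def a_def)
  have "\<bar>spectral_radius (rmat n R) - sqrt (real m) - h\<bar> \<le> B / sqrt (real m)"
    using upper lower u l unfolding ru_def rl_def by (simp add: abs_le_iff)
  thus ?thesis unfolding sr_eq hh m_def[symmetric] B_def by simp
qed

theorem lemma4p3:
  fixes K :: nat
  shows "\<exists>c :: real. \<exists>m0 :: nat. \<forall>n E A.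
     simple_graph n E \<and> A \<subseteq> {0..<n} \<and> A \<noteq> {} \<and> card A \<le> K \<and>
     (\<forall>i\<in>{0..<n} - A. \<forall>j\<in>{0..<n} - A. \<not> E i j) \<and>
     card {v \<in> {0..<n} - A. \<exists>a\<in>A. \<not> E v a} \<le> 1 \<and>
     num_edges n E \<ge> m0
     \<longrightarrow> \<bar>graph_spectral_radius n E - sqrt (real (num_edges n E))
            - real (induced_edges A E) / real (card A)\<bar>
         \<le> c / sqrt (real (num_edges n E))"
  apply (rule exI[of _ "3 * real K ^ 2"], rule exI[of _ "2*K^2+K+1"])
  apply (intro allI impI)
  apply (elim conjE)
  apply (rule main_bound)
  apply assumption+
  done

end
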